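(* Every $M_1\in GL_n(\mathbb{C}(\{z-1\}))$ can be written $M_1=C^{(1)}R^{(1)}$ where $R^{(1)}\in GL_n(\mathbb{C}(\{z-1\}))$ is regular at $1$ and $C^{(1)}\in GL_n(\mathbb{C}(z))$ is regular at $0$ and $\infty$ and of the form $C^{(1)}=u^{-k}T_{i_1,\underline{l_1}}D_{i_1,u}\cdots T_{i_r,\underline{l_r}}D_{i_r,u}$ with $k\in\mathbb{N}$, $r\in\mathbb{N}$, $i_1,\dots,i_r\in\{1,\dots,n\}$, $\underline{l_1},\dots,\underline{l_r}\in\mathbb{C}^n\setminus\{0\}$ and $u=\frac{z-1}{z+1}$.
   Context: $\mathbb{C}(\{z-1\})$ is the field of convergent Laurent series at $1$. A matrix is regular at $x\in\mathbb{C}$ if its entries are analytic at $x$ and its value at $x$ is invertible; regular at $\infty$ if $A(1/z)$ is regular at $0$. $D_{i,u}$ denotes the $n\times n$ identity matrix whose $(i,i)$ entry is replaced by $u$; for $\underline{l}=(l_1,\dots,l_n)$, $T_{i,\underline{l}}$ denotes the $n\times n$ identity matrix whose $i$-th row is replaced by $\underline{l}$. *)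

theory Defs
  imports "HOL-Complex_Analysis.Laurent_Convergence"
          "HOL-Computational_Algebra.Fraction_Field"
          "HOL-Computational_Algebra.Polynomial"
          "Jordan_Normal_Form.Determinant"
begin

text \<open>Elements of the field of convergent Laurent series at a point are modelled as
  formal Laurent series (in the local variable) with positive radius of convergence.\<close>
definition conv_fls :: "complex fls \<Rightarrow> bool" where
  "conv_fls f \<longleftrightarrow> fls_conv_radius f > 0"

definition GL_over :: "('a::semiring_1 \<Rightarrow> bool) \<Rightarrow> nat \<Rightarrow> 'a mat \<Rightarrow> bool" where
  "GL_over S n M \<longleftrightarrow> M \<in> carrier_mat n n \<and> (\<forall>i<n. \<forall>j<n. S (M $$ (i,j))) \<and>
     (\<exists>N. N \<in> carrier_mat n n \<and> (\<forall>i<n. \<forall>j<n. S (N $$ (i,j))) \<and>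
          M * N = 1\<^sub>m n \<and> N * M = 1\<^sub>m n)"

definition regular_fls :: "nat \<Rightarrow> complex fls mat \<Rightarrow> bool" where
  "regular_fls n A \<longleftrightarrow> A \<in> carrier_mat n n \<and>
     (\<forall>i<n. \<forall>j<n. conv_fls (A $$ (i,j)) \<and> fls_subdegree (A $$ (i,j)) \<ge> 0) \<and>
     invertible_mat (map_mat (\<lambda>f. fls_nth f 0) A)"

definition T_mat :: "(complex \<Rightarrow> 'a::field) \<Rightarrow> nat \<Rightarrow> nat \<Rightarrow> (nat \<Rightarrow> complex) \<Rightarrow> 'a mat" where
  "T_mat emb n i l = mat n n (\<lambda>(a,b). if a = i then emb (l b) else if a = b then 1 else 0)"

definition D_mat :: "nat \<Rightarrow> nat \<Rightarrow> 'a::field \<Rightarrow> 'a mat" where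
  "D_mat n i u = mat n n (\<lambda>(a,b). if a = b then (if a = i then u else 1) else 0)"

definition C_form :: "(complex \<Rightarrow> 'a::field) \<Rightarrow> nat \<Rightarrow> 'a \<Rightarrow> nat \<Rightarrow> (nat \<times> (nat \<Rightarrow> complex)) list \<Rightarrow> 'a mat" where
  "C_form emb n u k steps =
     (inverse u ^ k) \<cdot>\<^sub>m foldr (\<lambda>(i,l) A. T_mat emb n i l * D_mat n i u * A) steps (1\<^sub>m n)"

text \<open>u = (z-1)/(z+1) as a rational function, and its Laurent expansions:
  at z = 1 (variable w = z - 1): w/(2+w);
  at z = 0 (variable z): (z-1)/(z+1);
  at z = \<infinity> (variable t = 1/z): (1-t)/(1+t).\<close>
definition u_rat :: "complex poly fract" where
  "u_rat = Fract [:-1, 1:] [:1, 1:]"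
definition emb_rat :: "complex \<Rightarrow> complex poly fract" where
  "emb_rat c = Fract [:c:] 1"
definition u_at1 :: "complex fls" where
  "u_at1 = fls_X / (fls_const 2 + fls_X)"
definition u_at0 :: "complex fls" where
  "u_at0 = (fls_X - 1) / (fls_X + 1)"
definition u_atinf :: "complex fls" where
  "u_atinf = (1 - fls_X) / (1 + fls_X)"

end

theory Submission imports Defs begin

interpretation ofs: comm_ring_hom "fps_to_fls :: complex fps \<Rightarrow> complex fls"
  by unfold_locales (auto simp: fls_times_fps_to_fls)

interpretation h0: comm_ring_hom "\<lambda>f::complex fps. f $ 0"
  by unfold_locales auto

interpretation fc: comm_ring_hom "fls_const :: complex \<Rightarrow> complex fls"
  by unfold_locales (auto simp: fls_const_mult_const fls_plus_const)

abbreviation hf :: "complex fls \<Rightarrow> complex" where "hf f \<equiv> fls_nth f 0"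

abbreviation An :: "complex fls \<Rightarrow> bool" where "An f \<equiv> fls_subdegree f \<ge> 0"

lemma sum_closed:
  assumes "P 0" "\<And>x y. P x \<Longrightarrow> P y \<Longrightarrow> P (x+y)" "\<And>i. i \<in> I \<Longrightarrow> P (f i)"
  shows "P (sum f I)"
proof (cases "finite I")
  case True
  then show ?thesis using assms(3)
    by (induction I rule: finite_induct) (auto simp: assms(1,2))
qed (simp add: assms)

lemma mult_mat_closed:
  assumes "P 0" "\<And>x y. P x \<Longrightarrow> P y \<Longrightarrow> P (x+y)" "\<And>x y. P x \<Longrightarrow> P y \<Longrightarrow> P (x*y)"
    and A: "A \<in> carrier_mat nr m" and B: "B \<in> carrier_mat m nc"
    and PA: "\<forall>i<nr. \<forall>j<m. P (A$$(i,j))" and PB: "\<forall>i<m. \<forall>j<nc. P (B$$(i,j))"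
  shows "\<forall>i<nr. \<forall>j<nc. P ((A*B)$$(i,j))"
proof (intro allI impI)
  fix i j assume ij: "i < nr" "j < nc"
  have "(A*B)$$(i,j) = (\<Sum>k\<in>{0..<m}. A$$(i,k) * B$$(k,j))"
    using A B ij by (simp add: scalar_prod_def)
  also have "P \<dots>"
    by (rule sum_closed[OF assms(1,2)]) (use assms(3) PA PB ij in auto)
  finally show "P ((A*B)$$(i,j))" .
qed

lemma An_add: "An x \<Longrightarrow> An y \<Longrightarrow> An (x+y)"
proof -
  assume "An x" "An y"
  hence "x + y = fps_to_fls (fls_regpart x + fls_regpart y)" by simp
  thus ?thesis by (metis fls_subdegree_fls_to_fps_gt0)
qed

lemma An_mult: "An x \<Longrightarrow> An y \<Longrightarrow> An (x*y)"
proof -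
  assume "An x" "An y"
  hence "x * y = fps_to_fls (fls_regpart x * fls_regpart y)" by (simp add: fls_times_fps_to_fls)
  thus ?thesis by (metis fls_subdegree_fls_to_fps_gt0)
qed

lemma hfl_mult: "An x \<Longrightarrow> An y \<Longrightarrow> hf (x*y) = hf x * hf y"
proof -
  assume "An x" "An y"
  hence "x * y = fps_to_fls (fls_regpart x * fls_regpart y)" by (simp add: fls_times_fps_to_fls)
  thus ?thesis by simp
qed

lemma An_mat_ofs:
  assumes "A \<in> carrier_mat nr nc" "\<forall>i<nr. \<forall>j<nc. An (A$$(i,j))"
  shows "map_mat fps_to_fls (map_mat fls_regpart A) = A"
  using assms by (intro eq_matI) auto

lemma map_hfl_ofs: "map_mat hf (map_mat fps_to_fls A) = map_mat (\<lambda>f::complex fps. f $ 0) A"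
  by (intro eq_matI) auto

lemma An_mat_mult:
  assumes A: "A \<in> carrier_mat nr m" and B: "B \<in> carrier_mat m nc"
    and PA: "\<forall>i<nr. \<forall>j<m. An (A$$(i,j))" and PB: "\<forall>i<m. \<forall>j<nc. An (B$$(i,j))"
  shows "\<forall>i<nr. \<forall>j<nc. An ((A*B)$$(i,j))"
  by (rule mult_mat_closed[OF _ An_add An_mult A B PA PB]) simp

lemma map_hfl_mult:
  assumes A: "A \<in> carrier_mat nr m" and B: "B \<in> carrier_mat m nc"
    and PA: "\<forall>i<nr. \<forall>j<m. An (A$$(i,j))" and PB: "\<forall>i<m. \<forall>j<nc. An (B$$(i,j))"
  shows "map_mat hf (A*B) = map_mat hf A * map_mat hf B"
proof -
  let ?A = "map_mat fls_regpart A" and ?B = "map_mat fls_regpart B"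
  have "A * B = map_mat fps_to_fls (?A * ?B)"
    using ofs.mat_hom_mult[of ?A nr m ?B nc] A B
    by (simp add: An_mat_ofs[OF A PA] An_mat_ofs[OF B PB])
  hence "map_mat hf (A*B) = map_mat (\<lambda>f. f $ 0) (?A * ?B)"
    by (simp add: map_hfl_ofs)
  also have "\<dots> = map_mat (\<lambda>f. f $ 0) ?A * map_mat (\<lambda>f. f $ 0) ?B"
    using h0.mat_hom_mult[of ?A nr m ?B nc] A B by simp
  also have "\<dots> = map_mat hf A * map_mat hf B"
    by (metis An_mat_ofs[OF A PA] An_mat_ofs[OF B PB] map_hfl_ofs)
  finally show ?thesis .
qed

lemma det_hfl:
  assumes A: "A \<in> carrier_mat n n" and PA: "\<forall>i<n. \<forall>j<n. An (A$$(i,j))"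
  shows "An (det A) \<and> hf (det A) = det (map_mat hf A)"
proof -
  let ?A = "map_mat fls_regpart A"
  have "det A = fps_to_fls (det ?A)"
    by (metis An_mat_ofs[OF A PA] ofs.hom_det)
  moreover have "det (map_mat hf A) = det ?A $ 0"
    by (metis An_mat_ofs[OF A PA] map_hfl_ofs h0.hom_det)
  ultimately show ?thesis by (simp add: fls_subdegree_fls_to_fps_gt0)
qed


definition Tg :: "(complex \<Rightarrow> 'a::comm_ring_1) \<Rightarrow> nat \<Rightarrow> nat \<Rightarrow> (nat \<Rightarrow> complex) \<Rightarrow> 'a mat" where
  "Tg emb n i l = mat n n (\<lambda>(a,b). if a = i then emb (l b) else if a = b then 1 else 0)"
definition Dg :: "nat \<Rightarrow> nat \<Rightarrow> 'a::comm_ring_1 \<Rightarrow> 'a mat" where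
  "Dg n i u = mat n n (\<lambda>(a,b). if a = b then (if a = i then u else 1) else 0)"
definition Pg :: "(complex \<Rightarrow> 'a::comm_ring_1) \<Rightarrow> nat \<Rightarrow> 'a \<Rightarrow> (nat \<times> (nat \<Rightarrow> complex)) list \<Rightarrow> 'a mat" where
  "Pg emb n u steps = foldr (\<lambda>(i,l) A. Tg emb n i l * Dg n i u * A) steps (1\<^sub>m n)"
definition linv :: "(nat \<Rightarrow> complex) \<Rightarrow> nat \<Rightarrow> nat \<Rightarrow> complex" where
  "linv l i = (\<lambda>b. if b = i then 1 else - l b)"

lemma C_form_Pg: "C_form emb n u k steps = (inverse u ^ k) \<cdot>\<^sub>m Pg emb n u steps"
  unfolding C_form_def Pg_def T_mat_def Tg_def D_mat_def Dg_def ..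

lemma Tg_carrier[simp]: "Tg emb n i l \<in> carrier_mat n n" by (simp add: Tg_def)
lemma Dg_carrier[simp]: "Dg n i u \<in> carrier_mat n n" by (simp add: Dg_def)
lemma Tg_dims[simp]: "dim_row (Tg emb n i l) = n" "dim_col (Tg emb n i l) = n" by (auto simp: Tg_def)
lemma Dg_dims[simp]: "dim_row (Dg n i u) = n" "dim_col (Dg n i u) = n" by (auto simp: Dg_def)
lemma Pg_carrier[simp]: "Pg emb n u steps \<in> carrier_mat n n"
  by (induction steps) (auto simp: Pg_def intro!: mult_carrier_mat[of _ n n])
lemma Pg_dims[simp]: "dim_row (Pg emb n u steps) = n" "dim_col (Pg emb n u steps) = n"
  using carrier_matD[OF Pg_carrier] by auto
lemma Pg_Nil: "Pg emb n u [] = 1\<^sub>m n" by (simp add: Pg_def)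
lemma Pg_Cons: "Pg emb n u ((i,l)#steps) = Tg emb n i l * Dg n i u * Pg emb n u steps"
  by (simp add: Pg_def)

lemma linv_linv: "l i = 1 \<Longrightarrow> linv (linv l i) i = l"
  by (auto simp: linv_def)

lemma Tg_entry: "a < n \<Longrightarrow> b < n \<Longrightarrow> Tg emb n i l $$ (a,b) = (if a = i then emb (l b) else if a = b then 1 else 0)"
  by (simp add: Tg_def)
lemma Dg_entry: "a < n \<Longrightarrow> b < n \<Longrightarrow> Dg n i u $$ (a,b) = (if a = b then (if a = i then u else 1) else 0)"
  by (simp add: Dg_def)

lemma Tg_inv:
  fixes emb :: "complex \<Rightarrow> 'a::comm_ring_1"
  assumes i: "i < n" and li: "l i = 1" and e1: "emb 1 = 1" and en: "\<And>x. emb (-x) = - emb x"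
  shows "Tg emb n i l * Tg emb n i (linv l i) = 1\<^sub>m n"
proof (rule eq_matI)
  fix a c assume a: "a < dim_row (1\<^sub>m n)" and c: "c < dim_col (1\<^sub>m n)"
  hence a: "a < n" and c: "c < n" by auto
  let ?T = "Tg emb n i l" and ?T' = "Tg emb n i (linv l i)"
  have "(?T * ?T') $$ (a,c) = (\<Sum>b\<in>{0..<n}. ?T $$ (a,b) * ?T' $$ (b,c))"
    using a c by (simp add: scalar_prod_def)
  also have "\<dots> = ?T $$ (a,a) * ?T' $$ (a,c) + (\<Sum>b\<in>{0..<n}-{a}. ?T $$ (a,b) * ?T' $$ (b,c))"
    using a by (subst sum.remove[of _ a]) auto
  also have "\<dots> = 1\<^sub>m n $$ (a,c)"
  proof (cases "a = i")
    case False
    have "(\<Sum>b\<in>{0..<n}-{a}. ?T $$ (a,b) * ?T' $$ (b,c)) = 0"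
      by (rule sum.neutral) (use False a in \<open>auto simp: Tg_entry\<close>)
    thus ?thesis using False a c by (auto simp: Tg_entry)
  next
    case True
    have "(\<Sum>b\<in>{0..<n}-{a}. ?T $$ (a,b) * ?T' $$ (b,c)) =
          (\<Sum>b\<in>{0..<n}-{a}. if b = c then emb (l c) else 0)"
      by (rule sum.cong) (use True a c in \<open>auto simp: Tg_entry\<close>)
    also have "\<dots> = (if c \<noteq> a then emb (l c) else 0)"
      using c by (simp add: sum.delta')
    finally show ?thesis using True a c li e1
      by (auto simp: Tg_entry linv_def en)
  qed
  finally show "(?T * ?T') $$ (a,c) = 1\<^sub>m n $$ (a,c)" .
qed auto

lemma Dg_inv:
  fixes u v :: "'a::comm_ring_1"
  assumes "u * v = 1"
  shows "Dg n i u * Dg n i v = 1\<^sub>m n"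
proof (rule eq_matI)
  fix a c assume "a < dim_row (1\<^sub>m n)" "c < dim_col (1\<^sub>m n)"
  hence a: "a < n" and c: "c < n" by auto
  have "(Dg n i u * Dg n i v) $$ (a,c) = (\<Sum>b\<in>{0..<n}. Dg n i u $$ (a,b) * Dg n i v $$ (b,c))"
    using a c by (simp add: scalar_prod_def)
  also have "\<dots> = (\<Sum>b\<in>{0..<n}. if b = a then Dg n i u $$ (a,a) * Dg n i v $$ (a,c) else 0)"
    by (rule sum.cong) (auto simp: Dg_entry a)
  also have "\<dots> = 1\<^sub>m n $$ (a,c)"
    using a c assms by (simp add: sum.delta Dg_entry)
  finally show "(Dg n i u * Dg n i v) $$ (a,c) = 1\<^sub>m n $$ (a,c)" .
qed auto

lemma Dg_mult_entry:
  assumes X: "X \<in> carrier_mat n nc" and a: "a < n" and c: "c < nc"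
  shows "(Dg n i u * X) $$ (a,c) = (if a = i then u * X $$ (a,c) else X $$ (a,c))"
proof -
  have "(Dg n i u * X) $$ (a,c) = (\<Sum>b\<in>{0..<n}. Dg n i u $$ (a,b) * X $$ (b,c))"
    using a c X by (simp add: scalar_prod_def)
  also have "\<dots> = (\<Sum>b\<in>{0..<n}. if b = a then Dg n i u $$ (a,a) * X $$ (a,c) else 0)"
    by (rule sum.cong) (auto simp: Dg_entry a)
  also have "\<dots> = (if a = i then u * X $$ (a,c) else X $$ (a,c))"
    using a by (simp add: sum.delta Dg_entry)
  finally show ?thesis .
qed

lemma map_Tg: "\<phi> 0 = 0 \<Longrightarrow> \<phi> 1 = 1 \<Longrightarrow> map_mat \<phi> (Tg emb n i l) = Tg (\<lambda>c. \<phi> (emb c)) n i l"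
  by (intro eq_matI) (auto simp: Tg_def)
lemma map_Dg: "\<phi> 0 = 0 \<Longrightarrow> \<phi> 1 = 1 \<Longrightarrow> map_mat \<phi> (Dg n i u) = Dg n i (\<phi> u)"
  by (intro eq_matI) (auto simp: Dg_def)

lemma (in comm_ring_hom) map_Pg: "map_mat hom (Pg emb n u steps) = Pg (\<lambda>c. hom (emb c)) n (hom u) steps"
proof (induction steps)
  case Nil
  then show ?case by (simp add: Pg_Nil mat_hom_one)
next
  case (Cons st steps)
  obtain i l where st: "st = (i,l)" by (cases st)
  have "mat\<^sub>h (Tg emb n i l * Dg n i u * Pg emb n u steps) = mat\<^sub>h (Tg emb n i l * Dg n i u) * mat\<^sub>h (Pg emb n u steps)"
    by (rule mat_hom_mult) auto
  also have "mat\<^sub>h (Tg emb n i l * Dg n i u) = mat\<^sub>h (Tg emb n i l) * mat\<^sub>h (Dg n i u)"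
    by (rule mat_hom_mult) auto
  finally show ?case unfolding st Pg_Cons by (simp add: map_Tg map_Dg Cons)
qed

lemma Pg_closed:
  assumes "P 0" "P 1" "\<And>x y. P x \<Longrightarrow> P y \<Longrightarrow> P (x+y)" "\<And>x y. P x \<Longrightarrow> P y \<Longrightarrow> P (x*y)"
    "P u" "\<And>c. P (emb c)"
  shows "\<forall>a<n. \<forall>b<n. P (Pg emb n u steps $$ (a,b))"
proof (induction steps)
  case Nil
  then show ?case using assms by (simp add: Pg_Nil)
next
  case (Cons st steps)
  obtain i l where st: "st = (i,l)" by (cases st)
  have T: "\<forall>a<n. \<forall>b<n. P (Tg emb n i l $$ (a,b))" using assms by (simp add: Tg_entry)
  have D: "\<forall>a<n. \<forall>b<n. P (Dg n i u $$ (a,b))" using assms by (simp add: Dg_entry)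
  show ?case unfolding st Pg_Cons
    by (rule mult_mat_closed[OF assms(1,3,4) _ _ mult_mat_closed[OF assms(1,3,4) _ _ T D] Cons]) auto
qed

lemma map_hf_Pg:
  assumes "An u"
  shows "map_mat hf (Pg fls_const n u steps) = Pg (\<lambda>c. c) n (hf u) steps"
proof (induction steps)
  case Nil
  then show ?case by (simp add: Pg_Nil, intro eq_matI, auto)
next
  case (Cons st steps)
  obtain i l where st: "st = (i,l)" by (cases st)
  have T: "\<forall>a<n. \<forall>b<n. An (Tg fls_const n i l $$ (a,b))" by (simp add: Tg_entry)
  have D: "\<forall>a<n. \<forall>b<n. An (Dg n i u $$ (a,b))" using assms by (simp add: Dg_entry)
  have TD: "\<forall>a<n. \<forall>b<n. An ((Tg fls_const n i l * Dg n i u) $$ (a,b))"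
    by (rule An_mat_mult[OF _ _ T D]) auto
  have Pc: "\<forall>a<n. \<forall>b<n. An (Pg fls_const n u steps $$ (a,b))"
    by (rule Pg_closed) (auto intro: An_add An_mult simp: assms)
  have "map_mat hf (Pg fls_const n u ((i,l)#steps)) = map_mat hf (Tg fls_const n i l * Dg n i u) * map_mat hf (Pg fls_const n u steps)"
    unfolding Pg_Cons by (rule map_hfl_mult[OF _ _ TD Pc]) auto
  also have "map_mat hf (Tg fls_const n i l * Dg n i u) = map_mat hf (Tg fls_const n i l) * map_mat hf (Dg n i u)"
    by (rule map_hfl_mult[OF _ _ T D]) auto
  finally show ?case unfolding st Pg_Cons Cons
    by (simp add: map_Tg map_Dg)
qed

lemma mat_cancel:
  fixes A B X :: "'a::comm_ring_1 mat"
  assumes "A \<in> carrier_mat n n" "B \<in> carrier_mat n n" "X \<in> carrier_mat n m" "A * B = 1\<^sub>m n"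
  shows "A * (B * X) = X"
proof -
  have "A * (B * X) = (A * B) * X" by (rule assoc_mult_mat[symmetric]) (use assms in auto)
  also have "\<dots> = 1\<^sub>m n * X" using assms(4) by simp
  also have "\<dots> = X" using assms(3) by (rule left_mult_one_mat)
  finally show ?thesis .
qed

lemma Pg_inv:
  fixes emb :: "complex \<Rightarrow> 'a::field"
  assumes u: "u \<noteq> 0" and e1: "emb 1 = 1" and en: "\<And>x. emb (-x) = - emb x"
    and st: "\<forall>(i,l)\<in>set steps. i < n \<and> l i = 1"
  shows "\<exists>N\<in>carrier_mat n n. Pg emb n u steps * N = 1\<^sub>m n \<and> N * Pg emb n u steps = 1\<^sub>m n"
  using st
proof (induction steps)
  case Nil
  then show ?case by (intro bexI[of _ "1\<^sub>m n"]) (auto simp: Pg_Nil)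
next
  case (Cons st steps)
  obtain i l where st: "st = (i,l)" by (cases st)
  from Cons.prems st have i: "i < n" and li: "l i = 1" by auto
  from Cons obtain N where N: "N \<in> carrier_mat n n" "Pg emb n u steps * N = 1\<^sub>m n" "N * Pg emb n u steps = 1\<^sub>m n" by auto
  let ?T = "Tg emb n i l" and ?T' = "Tg emb n i (linv l i)" and ?D = "Dg n i u" and ?D' = "Dg n i (inverse u)"
  let ?P = "Pg emb n u steps"
  have TT: "?T * ?T' = 1\<^sub>m n" by (rule Tg_inv) (use i li e1 en in auto)
  have TT': "?T' * ?T = 1\<^sub>m n"
  proof -
    have "?T' * Tg emb n i (linv (linv l i) i) = 1\<^sub>m n"
      by (rule Tg_inv) (use i li e1 en in \<open>auto simp: linv_def\<close>)
    thus ?thesis by (simp add: linv_linv li)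
  qed
  have DD: "?D * ?D' = 1\<^sub>m n" "?D' * ?D = 1\<^sub>m n" by (rule Dg_inv, use u in simp)+
  have c: "?T \<in> carrier_mat n n" "?T' \<in> carrier_mat n n" "?D \<in> carrier_mat n n" "?D' \<in> carrier_mat n n" "?P \<in> carrier_mat n n"
    by auto
  show ?case
  proof (intro bexI[of _ "N * ?D' * ?T'"] conjI)
    show "N * ?D' * ?T' \<in> carrier_mat n n" using N c by auto
    have e1: "?P * (N * (?D' * ?T')) = ?D' * ?T'" by (rule mat_cancel) (use N c in auto)
    have e2: "?D * (?D' * ?T') = ?T'" by (rule mat_cancel) (use c DD in auto)
    have "?T * ?D * ?P * (N * ?D' * ?T') = ?T * (?D * (?P * (N * (?D' * ?T'))))"
      using N c by (simp add: assoc_mult_mat[of _ n n _ n _ n] mult_carrier_mat[of _ n n _ n])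
    also have "\<dots> = 1\<^sub>m n" using e1 e2 TT by simp
    finally show "Pg emb n u (st#steps) * (N * ?D' * ?T') = 1\<^sub>m n" unfolding Pg_Cons st .
    have f1: "?T' * (?T * (?D * ?P)) = ?D * ?P" by (rule mat_cancel) (use c TT' in auto)
    have f2: "?D' * (?D * ?P) = ?P" by (rule mat_cancel) (use c DD in auto)
    have "N * ?D' * ?T' * (?T * ?D * ?P) = N * (?D' * (?T' * (?T * (?D * ?P))))"
      using N c by (simp add: assoc_mult_mat[of _ n n _ n _ n] mult_carrier_mat[of _ n n _ n])
    also have "\<dots> = 1\<^sub>m n" using f1 f2 N by simp
    finally show "N * ?D' * ?T' * Pg emb n u (st#steps) = 1\<^sub>m n" unfolding Pg_Cons st .
  qed
qed


lemma cv_add: "conv_fls x \<Longrightarrow> conv_fls y \<Longrightarrow> conv_fls (x+y)"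
  unfolding conv_fls_def using fls_conv_radius_add[of x y] by (simp add: min_def split: if_splits)
lemma cv_mult: "conv_fls x \<Longrightarrow> conv_fls y \<Longrightarrow> conv_fls (x*y)"
  unfolding conv_fls_def using fls_conv_radius_mult[of x y] by (simp add: min_def split: if_splits)
lemma cv_ofs: "conv_fls (fps_to_fls f) \<longleftrightarrow> fps_conv_radius f > 0"
  by (simp add: conv_fls_def)
lemma cv_const[simp]: "conv_fls (fls_const c)"
proof -
  have "fls_const c = fps_to_fls (fps_const c)" by simp
  thus ?thesis unfolding conv_fls_def by simp
qed
lemma cv_0[simp]: "conv_fls 0" by (simp add: conv_fls_def)
lemma cv_1[simp]: "conv_fls 1" by (metis cv_const fls_const_1)

lemma cv_power: "conv_fls x \<Longrightarrow> conv_fls (x^k)"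
  by (induction k) (simp_all add: cv_mult)

lemma fps_pos_mult: "fps_conv_radius (f::complex fps) > 0 \<Longrightarrow> fps_conv_radius g > 0 \<Longrightarrow> fps_conv_radius (f*g) > 0"
  using fps_conv_radius_mult[of f g] by (simp add: min_def split: if_splits)

lemma unit_props:
  fixes a :: "complex fps"
  assumes u: "u = fps_to_fls a" and a0: "a $ 0 \<noteq> 0" and r: "fps_conv_radius a > 0"
  shows "conv_fls u" "conv_fls (inverse u)" "An u" "An (inverse u)" "hf u = a $ 0"
    "hf (inverse u) = inverse (a $ 0)" "u \<noteq> 0"
proof -
  have iu: "inverse u = fps_to_fls (inverse a)"
    using u a0 by (simp add: fls_inverse_fps_to_fls)
  have ri: "fps_conv_radius (inverse a) > 0" by (rule fps_conv_radius_inverse_pos[OF a0 r])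
  show "conv_fls u" "conv_fls (inverse u)" using u r iu ri by (simp_all add: cv_ofs)
  show "An u" "An (inverse u)" using u iu by (simp_all add: fls_subdegree_fls_to_fps_gt0)
  show "hf u = a $ 0" "hf (inverse u) = inverse (a $ 0)" using u iu by simp_all
  show "u \<noteq> 0" using u a0 by auto
qed

lemma u0_eq: "u_at0 = fps_to_fls ((fps_X - 1) * inverse (fps_X + 1))"
proof -
  have "inverse (fls_X + 1 :: complex fls) = inverse (fps_to_fls (fps_X + 1))" by simp
  also have "\<dots> = fps_to_fls (inverse (fps_X + 1))"
    by (rule fls_inverse_fps_to_fls) simp
  finally show ?thesis unfolding u_at0_def divide_inverse
    by (simp add: fls_times_fps_to_fls)
qed

lemma uinf_eq: "u_atinf = fps_to_fls ((1 - fps_X) * inverse (1 + fps_X))"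
proof -
  have "inverse (1 + fls_X :: complex fls) = inverse (fps_to_fls (1 + fps_X))" by simp
  also have "\<dots> = fps_to_fls (inverse (1 + fps_X))"
    by (rule fls_inverse_fps_to_fls) simp
  finally show ?thesis unfolding u_atinf_def divide_inverse
    by (simp add: fls_times_fps_to_fls)
qed

lemma fps_r_X1: "fps_conv_radius (fps_X - 1 :: complex fps) > 0" "fps_conv_radius (fps_X + 1 :: complex fps) > 0"
  "fps_conv_radius (1 - fps_X :: complex fps) > 0" "fps_conv_radius (1 + fps_X :: complex fps) > 0"
  "fps_conv_radius (fps_const 2 + fps_X :: complex fps) > 0"
  using fps_conv_radius_diff[of "fps_X::complex fps" 1] fps_conv_radius_add[of "fps_X::complex fps" 1]
    fps_conv_radius_diff[of 1 "fps_X::complex fps"] fps_conv_radius_add[of 1 "fps_X::complex fps"]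
    fps_conv_radius_add[of "fps_const 2" "fps_X::complex fps"]
  by auto

lemma u0_props: "conv_fls u_at0" "conv_fls (inverse u_at0)" "An u_at0" "An (inverse u_at0)" "hf u_at0 = -1"
    "hf (inverse u_at0) = -1" "u_at0 \<noteq> 0"
proof -
  have a0: "((fps_X - 1) * inverse (fps_X + 1) :: complex fps) $ 0 = -1" by simp
  have r: "fps_conv_radius ((fps_X - 1) * inverse (fps_X + 1) :: complex fps) > 0"
    by (intro fps_pos_mult fps_r_X1 fps_conv_radius_inverse_pos) auto
  note U = unit_props[OF u0_eq _ r, unfolded a0]
  show "conv_fls u_at0" "conv_fls (inverse u_at0)" "An u_at0" "An (inverse u_at0)" "hf u_at0 = -1"
    "hf (inverse u_at0) = -1" "u_at0 \<noteq> 0" using U by auto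
qed

lemma uinf_props: "conv_fls u_atinf" "conv_fls (inverse u_atinf)" "An u_atinf" "An (inverse u_atinf)" "hf u_atinf = 1"
    "hf (inverse u_atinf) = 1" "u_atinf \<noteq> 0"
proof -
  have a0: "((1 - fps_X) * inverse (1 + fps_X) :: complex fps) $ 0 = 1" by simp
  have r: "fps_conv_radius ((1 - fps_X) * inverse (1 + fps_X) :: complex fps) > 0"
    by (intro fps_pos_mult fps_r_X1 fps_conv_radius_inverse_pos) auto
  note U = unit_props[OF uinf_eq _ r, unfolded a0]
  show "conv_fls u_atinf" "conv_fls (inverse u_atinf)" "An u_atinf" "An (inverse u_atinf)" "hf u_atinf = 1"
    "hf (inverse u_atinf) = 1" "u_atinf \<noteq> 0" using U by auto
qed

lemma u1_props: "conv_fls u_at1" "conv_fls (inverse u_at1)" "An u_at1" "fls_subdegree u_at1 = 1"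
  "fls_subdegree (inverse u_at1) = -1" "u_at1 \<noteq> 0"
proof -
  define c :: "complex fps" where "c = fps_const 2 + fps_X"
  have c0: "c $ 0 = 2" by (simp add: c_def)
  have rc: "fps_conv_radius c > 0" unfolding c_def by (rule fps_r_X1)
  have w: "inverse (fls_const 2 + fls_X :: complex fls) = fps_to_fls (inverse c)"
  proof -
    have "inverse (fls_const 2 + fls_X :: complex fls) = inverse (fps_to_fls c)" by (simp add: c_def)
    also have "\<dots> = fps_to_fls (inverse c)" by (rule fls_inverse_fps_to_fls) (simp add: c0)
    finally show ?thesis .
  qed
  have ueq: "u_at1 = fls_X * fps_to_fls (inverse c)" unfolding u_at1_def divide_inverse w ..
  have ric: "fps_conv_radius (inverse c) > 0" by (rule fps_conv_radius_inverse_pos) (use c0 rc in auto)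
  have icne: "fps_to_fls (inverse c) \<noteq> 0" using c0 by (simp add: fps_inverse_0_iff)
  have Xne: "(fls_X :: complex fls) \<noteq> 0" by simp
  have cvX: "conv_fls (fls_X :: complex fls)"
  proof -
    have "(fls_X :: complex fls) = fps_to_fls fps_X" by simp
    thus ?thesis unfolding conv_fls_def by simp
  qed
  show "conv_fls u_at1" unfolding ueq by (rule cv_mult[OF cvX]) (simp add: cv_ofs ric)
  have sd: "fls_subdegree (fps_to_fls (inverse c)) = 0"
    by (simp add: fls_subdegree_fls_to_fps c0)
  show s1: "fls_subdegree u_at1 = 1" unfolding ueq using Xne icne sd by simp
  thus "An u_at1" by simp
  show une: "u_at1 \<noteq> 0" unfolding ueq using Xne icne by simp
  show "fls_subdegree (inverse u_at1) = -1" using s1 by simp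
  have "fps_to_fls (inverse c) = inverse (fps_to_fls c)"
    by (rule fls_inverse_fps_to_fls[symmetric]) (simp add: c0)
  hence "inverse u_at1 = fls_X_inv * fps_to_fls c"
    unfolding ueq by (simp add: fls_inverse_X)
  moreover have "conv_fls (fls_X_inv :: complex fls)"
    unfolding conv_fls_def fls_X_inv_conv_shift_1 fls_conv_radius_shift
    using cv_1 unfolding conv_fls_def .
  ultimately show "conv_fls (inverse u_at1)" using rc by (simp add: cv_mult cv_ofs)
qed


lemma smult_mult_smult:
  fixes P N :: "'a::comm_ring_1 mat"
  assumes "P \<in> carrier_mat n n" "N \<in> carrier_mat n n"
  shows "(a \<cdot>\<^sub>m P) * (b \<cdot>\<^sub>m N) = (a*b) \<cdot>\<^sub>m (P * N)"
proof -
  have "(a \<cdot>\<^sub>m P) * (b \<cdot>\<^sub>m N) = a \<cdot>\<^sub>m (P * (b \<cdot>\<^sub>m N))"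
    using assms by (intro mult_smult_assoc_mat[of _ n n]) auto
  also have "P * (b \<cdot>\<^sub>m N) = b \<cdot>\<^sub>m (P * N)"
    using assms by (intro mult_smult_distrib[of _ n n]) auto
  also have "a \<cdot>\<^sub>m (b \<cdot>\<^sub>m (P * N)) = (a*b) \<cdot>\<^sub>m (P * N)"
    by (intro eq_matI) (auto simp: mult.assoc)
  finally show ?thesis .
qed

lemma smult_one_mat': "(1::'a::comm_ring_1) \<cdot>\<^sub>m A = A"
  by (intro eq_matI) auto

lemma C_form_inv:
  fixes emb :: "complex \<Rightarrow> 'a::field"
  assumes u: "u \<noteq> 0" and e1: "emb 1 = 1" and en: "\<And>x. emb (-x) = - emb x"
    and st: "\<forall>(i,l)\<in>set steps. i < n \<and> l i = 1"
  shows "\<exists>N\<in>carrier_mat n n. C_form emb n u k steps * N = 1\<^sub>m n \<and> N * C_form emb n u k steps = 1\<^sub>m n"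
proof -
  obtain N where N: "N \<in> carrier_mat n n" "Pg emb n u steps * N = 1\<^sub>m n" "N * Pg emb n u steps = 1\<^sub>m n"
    using Pg_inv[OF u e1 en st] by blast
  have ab: "inverse u ^ k * u ^ k = 1" "u ^ k * inverse u ^ k = 1" using u
    by (simp_all add: power_mult_distrib[symmetric])
  show ?thesis unfolding C_form_Pg
  proof (intro bexI[of _ "u^k \<cdot>\<^sub>m N"] conjI)
    show "u^k \<cdot>\<^sub>m N \<in> carrier_mat n n" using N by simp
    show "(inverse u ^ k \<cdot>\<^sub>m Pg emb n u steps) * (u ^ k \<cdot>\<^sub>m N) = 1\<^sub>m n"
      using N ab by (simp add: smult_mult_smult[of _ n] smult_one_mat')
    show "(u ^ k \<cdot>\<^sub>m N) * (inverse u ^ k \<cdot>\<^sub>m Pg emb n u steps) = 1\<^sub>m n"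
      using N ab by (simp add: smult_mult_smult[of _ n] smult_one_mat')
  qed
qed

lemma An_power: "An x \<Longrightarrow> An (x^k)"
  by (induction k) (simp_all add: An_mult)
lemma hf_power: "An x \<Longrightarrow> hf (x^k) = hf x ^ k"
  by (induction k) (simp_all add: hfl_mult An_power)

lemma C_regular:
  assumes cu: "conv_fls u" "conv_fls (inverse u)" and au: "An u" "An (inverse u)"
    and h: "hf u \<noteq> 0" "hf (inverse u) = inverse (hf u)"
    and st: "\<forall>(i,l)\<in>set steps. i < n \<and> l i = 1"
  shows "regular_fls n (C_form fls_const n u k steps)"
proof -
  let ?P = "Pg fls_const n u steps" and ?c = "inverse u ^ k"
  have PC: "\<forall>a<n. \<forall>b<n. conv_fls (?P $$ (a,b))"
    by (rule Pg_closed) (auto intro: cv_add cv_mult simp: cu)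
  have PA: "\<forall>a<n. \<forall>b<n. An (?P $$ (a,b))"
    by (rule Pg_closed) (auto intro: An_add An_mult simp: au)
  have cc: "conv_fls ?c" "An ?c" using cu au by (auto intro: cv_power An_power)
  have eq: "map_mat hf (C_form fls_const n u k steps) = C_form (\<lambda>c. c) n (hf u) k steps"
  proof -
    have "map_mat hf (?c \<cdot>\<^sub>m ?P) = hf ?c \<cdot>\<^sub>m map_mat hf ?P"
      by (intro eq_matI) (use PA cc in \<open>auto simp: hfl_mult\<close>)
    also have "hf ?c = inverse (hf u) ^ k" using au h by (simp add: hf_power)
    finally show ?thesis unfolding C_form_Pg map_hf_Pg[OF au(1)] .
  qed
  obtain N where N: "N\<in>carrier_mat n n" "C_form (\<lambda>c. c) n (hf u) k steps * N = 1\<^sub>m n"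
    "N * C_form (\<lambda>c. c) n (hf u) k steps = 1\<^sub>m n"
    using C_form_inv[OF h(1) _ _ st, of "\<lambda>c. c" k] by auto
  show ?thesis unfolding regular_fls_def
  proof (intro conjI)
    show "C_form fls_const n u k steps \<in> carrier_mat n n" unfolding C_form_Pg by simp
    show "\<forall>i<n. \<forall>j<n. conv_fls (C_form fls_const n u k steps $$ (i, j)) \<and> 0 \<le> fls_subdegree (C_form fls_const n u k steps $$ (i, j))"
      unfolding C_form_Pg using PC PA cc by (auto intro: cv_mult An_mult)
    show "invertible_mat (map_mat hf (C_form fls_const n u k steps))"
      unfolding eq invertible_mat_def inverts_mat_def using N
      by (auto simp: C_form_Pg)
  qed
qed

lemma emb_rat_props: "emb_rat 1 = 1" "\<And>x. emb_rat (-x) = - emb_rat x" "u_rat \<noteq> 0"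
  by (auto simp: emb_rat_def u_rat_def minus_fract One_fract_def Zero_fract_def eq_fract)


lemma det_invertible:
  fixes A :: "'a::field mat"
  assumes A: "A \<in> carrier_mat n n" and d: "det A \<noteq> 0"
  shows "invertible_mat A"
proof -
  from det_non_zero_imp_unit[OF A d, of "()"]
  obtain B where B: "B \<in> carrier_mat n n" "B * A = 1\<^sub>m n" "A * B = 1\<^sub>m n"
    unfolding Units_def ring_mat_def by auto
  thus ?thesis using A unfolding invertible_mat_def inverts_mat_def square_mat.simps by auto
qed

lemma An_shift:
  assumes "An f" "hf f = 0"
  shows "An (inverse u_at1 * f)"
proof (cases "f = 0")
  case False
  have "fls_subdegree f \<noteq> 0"
  proof
    assume h: "fls_subdegree f = 0"
    have "fls_nth f (fls_subdegree f) \<noteq> 0" using False by simp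
    thus False using h assms(2) by simp
  qed
  hence "fls_subdegree f \<ge> 1" using assms(1) by linarith
  moreover have "inverse u_at1 \<noteq> 0" using u1_props by simp
  ultimately show ?thesis using False u1_props by simp
qed simp

lemma Dg_multrow: "Dg n i w = multrow_mat n i w"
  by (intro eq_matI) (auto simp: Dg_def multrow_mat_def)

definition Concl :: "nat \<Rightarrow> complex fls mat \<Rightarrow> bool" where
  "Concl n A \<longleftrightarrow> (\<exists>steps R RB. (\<forall>(i,l)\<in>set steps. i < n \<and> l i = 1) \<and> R \<in> carrier_mat n n \<and> RB \<in> carrier_mat n n \<and>
       R * RB = 1\<^sub>m n \<and> RB * R = 1\<^sub>m n \<and>
       (\<forall>a<n. \<forall>b<n. conv_fls (R$$(a,b)) \<and> An (R$$(a,b)) \<and> conv_fls (RB$$(a,b))) \<and>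
       invertible_mat (map_mat hf R) \<and> A = Pg fls_const n u_at1 steps * R)"

lemma main_lemma:
  fixes d :: nat
  shows "\<And>A B. A \<in> carrier_mat n n \<Longrightarrow> B \<in> carrier_mat n n \<Longrightarrow> A * B = 1\<^sub>m n \<Longrightarrow> B * A = 1\<^sub>m n \<Longrightarrow>
     \<forall>a<n. \<forall>b<n. conv_fls (A$$(a,b)) \<and> An (A$$(a,b)) \<and> conv_fls (B$$(a,b)) \<Longrightarrow>
     fls_subdegree (det A) = int d \<Longrightarrow>
     Concl n A"
proof (induction d)
  case 0
  fix A B :: "complex fls mat"
  assume A: "A \<in> carrier_mat n n" and B: "B \<in> carrier_mat n n" and AB: "A * B = 1\<^sub>m n" and BA: "B * A = 1\<^sub>m n"
    and P: "\<forall>a<n. \<forall>b<n. conv_fls (A$$(a,b)) \<and> An (A$$(a,b)) \<and> conv_fls (B$$(a,b))"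
    and d: "fls_subdegree (det A) = int 0"
  have "det A * det B = 1" using det_mult[OF A B] AB by simp
  hence dA: "det A \<noteq> 0" by auto
  have PA: "\<forall>a<n. \<forall>b<n. An (A$$(a,b))" using P by auto
  have "det (map_mat hf A) = hf (det A)" using det_hfl[OF A PA] by simp
  also have "\<dots> \<noteq> 0" using nth_fls_subdegree_nonzero[OF dA] d by simp
  finally have "invertible_mat (map_mat hf A)" by (intro det_invertible[of _ n]) (use A in auto)
  thus "Concl n A" unfolding Concl_def
    using A B AB BA P
    by (intro exI[of _ "[]"] exI[of _ A] exI[of _ B]) (auto simp: Pg_Nil)
next
  case (Suc d)
  fix A B :: "complex fls mat"
  assume A: "A \<in> carrier_mat n n" and B: "B \<in> carrier_mat n n" and AB: "A * B = 1\<^sub>m n" and BA: "B * A = 1\<^sub>m n"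
    and P: "\<forall>a<n. \<forall>b<n. conv_fls (A$$(a,b)) \<and> An (A$$(a,b)) \<and> conv_fls (B$$(a,b))"
    and d: "fls_subdegree (det A) = int (Suc d)"
  have "det A * det B = 1" using det_mult[OF A B] AB by simp
  hence dA: "det A \<noteq> 0" by auto
  have PA: "\<forall>a<n. \<forall>b<n. An (A$$(a,b))" and CA: "\<forall>a<n. \<forall>b<n. conv_fls (A$$(a,b))"
    and CB: "\<forall>a<n. \<forall>b<n. conv_fls (B$$(a,b))" using P by auto
  define A0 where "A0 = map_mat hf A"
  have A0: "A0 \<in> carrier_mat n n" using A by (simp add: A0_def)
  have "det A0 = hf (det A)" using det_hfl[OF A PA] by (simp add: A0_def)
  also have "\<dots> = 0" using d by simp
  finally have "det (transpose_mat A0) = 0" using det_transpose[OF A0] by simp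
  then obtain v where v: "v \<in> carrier_vec n" "v \<noteq> 0\<^sub>v n" "transpose_mat A0 *\<^sub>v v = 0\<^sub>v n"
    using det_0_iff_vec_prod_zero_field[of "transpose_mat A0" n] A0 by auto
  obtain i where i: "i < n" "v $ i \<noteq> 0"
  proof -
    have "\<exists>i<n. v $ i \<noteq> 0"
    proof (rule ccontr)
      assume "\<not> ?thesis"
      hence "v = 0\<^sub>v n" using v(1) by (intro eq_vecI) auto
      thus False using v(2) by simp
    qed
    thus ?thesis using that by blast
  qed
  define l where "l = (\<lambda>b. if b < n then v $ b / v $ i else 0)"
  have li: "l i = 1" using i by (simp add: l_def)
  have lsum: "(\<Sum>b\<in>{0..<n}. l b * A0 $$ (b,c)) = 0" if c: "c < n" for c
  proof -
    have "(\<Sum>b\<in>{0..<n}. A0 $$ (b,c) * v $ b) = (transpose_mat A0 *\<^sub>v v) $ c"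
      using c A0 v(1) by (simp add: mult_mat_vec_def scalar_prod_def)
    also have "\<dots> = 0" using v(3) c by simp
    finally have "(\<Sum>b\<in>{0..<n}. A0 $$ (b,c) * v $ b) = 0" .
    hence "(\<Sum>b\<in>{0..<n}. A0 $$ (b,c) * v $ b) / v $ i = 0" by simp
    thus ?thesis by (simp add: l_def sum_divide_distrib mult.commute)
  qed
  define T where "T = Tg fls_const n i l"
  define T' where "T' = Tg fls_const n i (linv l i)"
  define w where "w = inverse u_at1"
  define A1 where "A1 = T * A"
  define A2 where "A2 = Dg n i w * A1"
  define B2 where "B2 = B * (T' * Dg n i u_at1)"
  have cT: "T \<in> carrier_mat n n" "T' \<in> carrier_mat n n" by (simp_all add: T_def T'_def)
  have cA1: "A1 \<in> carrier_mat n n" using A cT by (simp add: A1_def)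
  have cA2: "A2 \<in> carrier_mat n n" unfolding A2_def by (rule mult_carrier_mat[OF Dg_carrier cA1])
  have cB2: "B2 \<in> carrier_mat n n" using B cT by (simp add: B2_def)
  have TA: "\<forall>a<n. \<forall>b<n. An (T$$(a,b))" "\<forall>a<n. \<forall>b<n. conv_fls (T$$(a,b))"
    "\<forall>a<n. \<forall>b<n. conv_fls (T'$$(a,b))"
    by (simp_all add: T_def T'_def Tg_entry)
  have A1A: "\<forall>a<n. \<forall>b<n. An (A1$$(a,b))" unfolding A1_def
    by (rule An_mat_mult[OF cT(1) A TA(1) PA])
  have A1C: "\<forall>a<n. \<forall>b<n. conv_fls (A1$$(a,b))" unfolding A1_def
    by (rule mult_mat_closed[OF _ cv_add cv_mult cT(1) A TA(2) CA]) simp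
  have hT: "map_mat hf T = Tg (\<lambda>c. c) n i l" unfolding T_def by (simp add: map_Tg)
  have A1i: "hf (A1 $$ (i,c)) = 0" if c: "c < n" for c
  proof -
    have "hf (A1 $$ (i,c)) = map_mat hf A1 $$ (i,c)" using c i cA1 by simp
    also have "map_mat hf A1 = Tg (\<lambda>c. c) n i l * A0"
      unfolding A1_def A0_def hT[symmetric] by (rule map_hfl_mult[OF cT(1) A TA(1) PA])
    also have "(Tg (\<lambda>c. c) n i l * A0) $$ (i,c) = (\<Sum>b\<in>{0..<n}. Tg (\<lambda>c. c) n i l $$ (i,b) * A0 $$ (b,c))"
      using c i A0 by (simp add: scalar_prod_def)
    also have "\<dots> = (\<Sum>b\<in>{0..<n}. l b * A0 $$ (b,c))"
      by (rule sum.cong) (use i in \<open>auto simp: Tg_entry\<close>)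
    also have "\<dots> = 0" by (rule lsum[OF c])
    finally show ?thesis .
  qed
  have A2e: "A2 $$ (a,c) = (if a = i then w * A1 $$ (a,c) else A1 $$ (a,c))" if "a < n" "c < n" for a c
    unfolding A2_def by (rule Dg_mult_entry[OF cA1 that])
  have A2P: "\<forall>a<n. \<forall>b<n. conv_fls (A2$$(a,b)) \<and> An (A2$$(a,b))"
  proof (intro allI impI conjI)
    fix a b assume ab: "a < n" "b < n"
    show "conv_fls (A2$$(a,b))" using A2e[OF ab] A1C ab u1_props by (auto intro: cv_mult simp: w_def)
    show "An (A2$$(a,b))" using A2e[OF ab] A1A ab A1i An_shift by (auto simp: w_def)
  qed
  have B2C: "\<forall>a<n. \<forall>b<n. conv_fls (B2$$(a,b))"
  proof -
    have D: "\<forall>a<n. \<forall>b<n. conv_fls (Dg n i u_at1 $$(a,b))" using u1_props by (simp add: Dg_entry)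
    have "\<forall>a<n. \<forall>b<n. conv_fls ((T' * Dg n i u_at1)$$(a,b))"
      by (rule mult_mat_closed[OF _ cv_add cv_mult cT(2) _ TA(3) D]) auto
    thus ?thesis unfolding B2_def
      by (intro mult_mat_closed[OF _ cv_add cv_mult B mult_carrier_mat[OF cT(2) Dg_carrier] CB]) auto
  qed
  have une: "u_at1 \<noteq> 0" using u1_props by simp
  have wne: "w \<noteq> 0" using une by (simp add: w_def)
  have TT: "T * T' = 1\<^sub>m n" unfolding T_def T'_def by (rule Tg_inv) (use i li in auto)
  have TT': "T' * T = 1\<^sub>m n"
  proof -
    have "T' * Tg fls_const n i (linv (linv l i) i) = 1\<^sub>m n"
      unfolding T'_def by (rule Tg_inv) (use i li in \<open>auto simp: linv_def\<close>)
    thus ?thesis by (simp add: linv_linv li T_def)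
  qed
  have DD: "Dg n i w * Dg n i u_at1 = 1\<^sub>m n" "Dg n i u_at1 * Dg n i w = 1\<^sub>m n"
    by (rule Dg_inv, use une in \<open>simp add: w_def\<close>)+
  have cD: "Dg n i w \<in> carrier_mat n n" "Dg n i u_at1 \<in> carrier_mat n n" by auto
  have cTD: "T' * Dg n i u_at1 \<in> carrier_mat n n" using cT cD by simp
  have cTA: "T * A \<in> carrier_mat n n" using cT A by simp
  have A2B2: "A2 * B2 = 1\<^sub>m n"
  proof -
    have "A2 * B2 = Dg n i w * (T * (A * (B * (T' * Dg n i u_at1))))"
      unfolding A2_def B2_def A1_def using A B cT cD
      by (simp add: assoc_mult_mat[of _ n n _ n _ n] mult_carrier_mat[of _ n n _ n])
    also have "A * (B * (T' * Dg n i u_at1)) = T' * Dg n i u_at1"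
      by (rule mat_cancel[OF A B cTD AB])
    also have "T * (T' * Dg n i u_at1) = Dg n i u_at1"
      by (rule mat_cancel[OF cT(1) cT(2) cD(2) TT])
    finally show ?thesis using DD by simp
  qed
  have B2A2: "B2 * A2 = 1\<^sub>m n"
  proof -
    have "B2 * A2 = B * (T' * (Dg n i u_at1 * (Dg n i w * (T * A))))"
      unfolding A2_def B2_def A1_def using A B cT cD
      by (simp add: assoc_mult_mat[of _ n n _ n _ n] mult_carrier_mat[of _ n n _ n])
    also have "Dg n i u_at1 * (Dg n i w * (T * A)) = T * A"
      by (rule mat_cancel[OF cD(2) cD(1) cTA DD(2)])
    also have "T' * (T * A) = A"
      by (rule mat_cancel[OF cT(2) cT(1) A TT'])
    finally show ?thesis using BA by simp
  qed
  have Tmap: "T = map_mat fls_const (Tg (\<lambda>c. c) n i l)" unfolding T_def by (simp add: map_Tg)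
  have tne: "det (Tg (\<lambda>c. c) n i l) \<noteq> 0"
  proof -
    have "Tg (\<lambda>c. c) n i l * Tg (\<lambda>c. c) n i (linv l i) = 1\<^sub>m n"
      by (rule Tg_inv) (use i li in auto)
    hence "det (Tg (\<lambda>c. c) n i l) * det (Tg (\<lambda>c. c) n i (linv l i)) = 1"
      using det_mult[of "Tg (\<lambda>c. c) n i l" n "Tg (\<lambda>c. c) n i (linv l i)"] by simp
    thus ?thesis by auto
  qed
  have detT: "det T = fls_const (det (Tg (\<lambda>c. c) n i l))" unfolding Tmap by simp
  have "det A2 = det (Dg n i w) * (det T * det A)"
    unfolding A2_def A1_def by (simp add: det_mult[OF cD(1) cTA] det_mult[OF cT(1) A])
  also have "det (Dg n i w) = w" unfolding Dg_multrow by (rule det_multrow_mat[OF i(1)])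
  finally have "det A2 = w * (det T * det A)" .
  hence "fls_subdegree (det A2) = int d"
    using d wne dA tne u1_props by (simp add: detT w_def)
  hence "Concl n A2"
    by (rule Suc.IH[OF cA2 cB2 A2B2 B2A2, rotated]) (use A2P B2C in auto)
  then obtain steps R RB where R: "\<forall>(i,l)\<in>set steps. i < n \<and> l i = 1" "R \<in> carrier_mat n n" "RB \<in> carrier_mat n n"
       "R * RB = 1\<^sub>m n" "RB * R = 1\<^sub>m n"
       "\<forall>a<n. \<forall>b<n. conv_fls (R$$(a,b)) \<and> An (R$$(a,b)) \<and> conv_fls (RB$$(a,b))"
       "invertible_mat (map_mat hf R)" "A2 = Pg fls_const n u_at1 steps * R"
    unfolding Concl_def by blast
  have "A = T' * (Dg n i u_at1 * A2)"
  proof -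
    have "Dg n i u_at1 * A2 = T * A" unfolding A2_def A1_def
      by (rule mat_cancel[OF cD(2) cD(1) cTA DD(2)])
    thus ?thesis by (simp add: mat_cancel[OF cT(2) cT(1) A TT'])
  qed
  also have "\<dots> = Pg fls_const n u_at1 ((i, linv l i) # steps) * R"
    unfolding R(8) Pg_Cons T'_def[symmetric] using cT R(2)
    by (simp add: assoc_mult_mat[of _ n n _ n _ n] mult_carrier_mat[of _ n n _ n])
  finally have AR: "A = Pg fls_const n u_at1 ((i, linv l i) # steps) * R" .
  show "Concl n A" unfolding Concl_def
    by (intro exI[of _ "(i, linv l i) # steps"] exI[of _ R] exI[of _ RB])
       (use R AR i in \<open>auto simp: linv_def\<close>)
qed


lemma u1_pow: "fls_subdegree (u_at1 ^ k) = int k" "u_at1 ^ k \<noteq> 0"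
proof -
  show ne: "u_at1 ^ k \<noteq> 0" using u1_props by simp
  show "fls_subdegree (u_at1 ^ k) = int k"
  proof (induction k)
    case (Suc k)
    have "u_at1 ^ k \<noteq> 0" using u1_props by simp
    thus ?case using Suc u1_props by simp
  qed simp
qed

theorem mainTheorem13:
  fixes n :: nat and M1 :: "complex fls mat"
  assumes "GL_over conv_fls n M1"
  shows "\<exists>R1 k steps.
     GL_over conv_fls n R1 \<and> regular_fls n R1 \<and>
     (\<forall>(i,l) \<in> set steps. i < n \<and> (\<exists>j<n. l j \<noteq> 0)) \<and>
     GL_over (\<lambda>_. True) n (C_form emb_rat n u_rat k steps) \<and>
     regular_fls n (C_form fls_const n u_at0 k steps) \<and>
     regular_fls n (C_form fls_const n u_atinf k steps) \<and>
     M1 = C_form fls_const n u_at1 k steps * R1"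
proof -
  obtain N where M: "M1 \<in> carrier_mat n n" "\<forall>i<n. \<forall>j<n. conv_fls (M1 $$ (i,j))"
    and N: "N \<in> carrier_mat n n" "\<forall>i<n. \<forall>j<n. conv_fls (N $$ (i,j))" "M1 * N = 1\<^sub>m n" "N * M1 = 1\<^sub>m n"
    using assms unfolding GL_over_def by blast
  define k where "k = (\<Sum>a<n. \<Sum>b<n. nat (- fls_subdegree (M1 $$ (a,b))))"
  define A0 where "A0 = u_at1 ^ k \<cdot>\<^sub>m M1"
  define B0 where "B0 = inverse u_at1 ^ k \<cdot>\<^sub>m N"
  have cA0: "A0 \<in> carrier_mat n n" "B0 \<in> carrier_mat n n" using M N by (simp_all add: A0_def B0_def)
  have kb: "nat (- fls_subdegree (M1 $$ (a,b))) \<le> k" if "a < n" "b < n" for a b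
  proof -
    have "nat (- fls_subdegree (M1 $$ (a,b))) \<le> (\<Sum>b<n. nat (- fls_subdegree (M1 $$ (a,b))))"
      by (rule member_le_sum) (use that in auto)
    also have "\<dots> \<le> k" unfolding k_def
      by (rule member_le_sum[of a "{..<n}" "\<lambda>a. \<Sum>b<n. nat (- fls_subdegree (M1 $$ (a,b)))"]) (use that in auto)
    finally show ?thesis .
  qed
  have ab: "u_at1 ^ k * inverse u_at1 ^ k = 1" "inverse u_at1 ^ k * u_at1 ^ k = 1"
    using u1_props by (simp_all add: power_mult_distrib[symmetric])
  have PA0: "\<forall>a<n. \<forall>b<n. conv_fls (A0$$(a,b)) \<and> An (A0$$(a,b)) \<and> conv_fls (B0$$(a,b))"
  proof (intro allI impI conjI)
    fix a b assume ab: "a < n" "b < n"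
    show "conv_fls (A0$$(a,b))" "conv_fls (B0$$(a,b))"
      using M N ab u1_props by (auto simp: A0_def B0_def intro!: cv_mult cv_power)
    show "An (A0$$(a,b))"
    proof (cases "M1 $$ (a,b) = 0")
      case False
      thus ?thesis using kb[OF ab] M ab u1_pow by (simp add: A0_def)
    qed (use M ab in \<open>simp add: A0_def\<close>)
  qed
  have A0B0: "A0 * B0 = 1\<^sub>m n" "B0 * A0 = 1\<^sub>m n"
    using M N ab by (simp_all add: A0_def B0_def smult_mult_smult[of _ n] smult_one_mat')
  have "det A0 * det B0 = 1" using det_mult[OF cA0] A0B0 by simp
  hence "det A0 \<noteq> 0" by auto
  have "An (det A0)" using det_hfl[OF cA0(1)] PA0 by auto
  then obtain d :: nat where d: "fls_subdegree (det A0) = int d"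
    by (metis nonneg_eq_int)
  have "Concl n A0" by (rule main_lemma[OF cA0 A0B0 PA0 d])
  then obtain steps R RB where R: "\<forall>(i,l)\<in>set steps. i < n \<and> l i = 1" "R \<in> carrier_mat n n" "RB \<in> carrier_mat n n"
       "R * RB = 1\<^sub>m n" "RB * R = 1\<^sub>m n"
       "\<forall>a<n. \<forall>b<n. conv_fls (R$$(a,b)) \<and> An (R$$(a,b)) \<and> conv_fls (RB$$(a,b))"
       "invertible_mat (map_mat hf R)" "A0 = Pg fls_const n u_at1 steps * R"
    unfolding Concl_def by blast
  have "M1 = inverse u_at1 ^ k \<cdot>\<^sub>m A0"
    unfolding A0_def using ab M by (intro eq_matI) (auto simp: mult.assoc[symmetric])
  also have "\<dots> = C_form fls_const n u_at1 k steps * R"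
    unfolding R(8) C_form_Pg using R(2) by (simp add: mult_smult_assoc_mat[of _ n n _ n])
  finally have MR: "M1 = C_form fls_const n u_at1 k steps * R" .
  have GLR: "GL_over conv_fls n R" unfolding GL_over_def using R by blast
  have regR: "regular_fls n R" unfolding regular_fls_def using R by blast
  have st: "\<forall>(i,l) \<in> set steps. i < n \<and> (\<exists>j<n. l j \<noteq> 0)" using R(1) by fastforce
  obtain NC where NC: "NC\<in>carrier_mat n n" "C_form emb_rat n u_rat k steps * NC = 1\<^sub>m n"
    "NC * C_form emb_rat n u_rat k steps = 1\<^sub>m n"
    using C_form_inv[OF emb_rat_props(3) emb_rat_props(1) emb_rat_props(2) R(1), of k] by blast
  have GLC: "GL_over (\<lambda>_. True) n (C_form emb_rat n u_rat k steps)"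
    unfolding GL_over_def using NC by (auto simp: C_form_Pg)
  have r0: "regular_fls n (C_form fls_const n u_at0 k steps)"
    by (rule C_regular[OF u0_props(1-4) _ _ R(1)]) (simp_all add: u0_props)
  have rinf: "regular_fls n (C_form fls_const n u_atinf k steps)"
    by (rule C_regular[OF uinf_props(1-4) _ _ R(1)]) (simp_all add: uinf_props)
  show ?thesis using GLR regR st GLC r0 rinf MR by blast
qed

end
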